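(* Let $X$ be a strictly convex normed plane, let $K_4$ have vertex set $\{v_1,v_2,v_3,v_4\}$, let $e=v_1v_4$, and let $p$ be a placement of $K_4-e$ in 3-cycle general position. Then: (i) every placement $q$ of $K_4-e$ with $\|q_v-q_w\|=\|p_v-p_w\|$ for all edges $vw$ of $K_4-e$ is also in 3-cycle general position; (ii) if $(K_4-e,p)$ is well-positioned, then it is independent.
   Context: A normed plane is a 2-dimensional real normed space. $X$ is strictly convex if $\|tx+(1-t)y\|<1$ for all distinct $x,y$ with $\|x\|=\|y\|=1$ and all $t\in(0,1)$. A placement of $K_4-e$ is in 3-cycle general position if for each of its two triangles $\{v_1,v_2,v_3\}$ and $\{v_2,v_3,v_4\}$ the three image points are affinely independent (not collinear). A nonzero $x\in X$ is smooth if it has exactly one support functional $f\in X^*$ ($\|f\|=\|x\|$, $f(x)=\|x\|^2$), denoted $\varphi(x)$. A placement is well-positioned if $p_v-p_w$ is smooth for every edge $vw$; then $\varphi_{v,w}:=\varphi((p_v-p_w)/\|p_v-p_w\|)$, and the framework is independent if the linear map $X^{V}\to\mathbb{R}^{E}$, $u\mapsto(\varphi_{v,w}(u_v-u_w))_{vw\in E}$, is surjective. *)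

theory Defs
  imports "HOL-Analysis.Analysis"
begin

definition strictly_convex :: "'a::real_normed_vector itself \<Rightarrow> bool" where
  "strictly_convex _ \<longleftrightarrow>
     (\<forall>x y :: 'a. \<forall>t::real. norm x = 1 \<longrightarrow> norm y = 1 \<longrightarrow> x \<noteq> y \<longrightarrow> 0 < t \<longrightarrow> t < 1
        \<longrightarrow> norm (t *\<^sub>R x + (1 - t) *\<^sub>R y) < 1)"

definition support_functional :: "'a::real_normed_vector \<Rightarrow> ('a \<Rightarrow> real) \<Rightarrow> bool" where
  "support_functional x f \<longleftrightarrow> bounded_linear f \<and> onorm f = norm x \<and> f x = (norm x)^2"

definition smooth :: "'a::real_normed_vector \<Rightarrow> bool" where
  "smooth x \<longleftrightarrow> x \<noteq> 0 \<and> (\<exists>!f. support_functional x f)"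

definition supp_fun :: "'a::real_normed_vector \<Rightarrow> ('a \<Rightarrow> real)" where
  "supp_fun x = (THE f. support_functional x f)"

text \<open>The graph K4 - e, with vertices v1..v4 and the edge v1v4 removed.
  Edges are given a fixed orientation (irrelevant for the notions below).\<close>
datatype vtx = v1 | v2 | v3 | v4

definition K4e_edges :: "(vtx \<times> vtx) set" where
  "K4e_edges = {(v1,v2), (v1,v3), (v2,v3), (v2,v4), (v3,v4)}"

definition three_cycle_gp :: "(vtx \<Rightarrow> 'a::real_normed_vector) \<Rightarrow> bool" where
  "three_cycle_gp p \<longleftrightarrow> \<not> collinear {p v1, p v2, p v3} \<and> \<not> collinear {p v2, p v3, p v4}"

definition well_positioned :: "(vtx \<Rightarrow> 'a::real_normed_vector) \<Rightarrow> bool" where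
  "well_positioned p \<longleftrightarrow> (\<forall>(v,w)\<in>K4e_edges. smooth (p v - p w))"

definition edge_fun :: "(vtx \<Rightarrow> 'a::real_normed_vector) \<Rightarrow> vtx \<Rightarrow> vtx \<Rightarrow> ('a \<Rightarrow> real)" where
  "edge_fun p v w = supp_fun ((1 / norm (p v - p w)) *\<^sub>R (p v - p w))"

text \<open>Independence: the rigidity map u \<mapsto> (phi_vw(u_v - u_w))_{vw in E} is surjective onto R^E.\<close>
definition independent_fw :: "(vtx \<Rightarrow> 'a::real_normed_vector) \<Rightarrow> bool" where
  "independent_fw p \<longleftrightarrow>
     (\<forall>b :: vtx \<times> vtx \<Rightarrow> real. \<exists>u :: vtx \<Rightarrow> 'a.
        \<forall>(v,w)\<in>K4e_edges. edge_fun p v w (u v - u w) = b (v,w))"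

end

theory Submission
  imports Defs
begin

lemma sc_eq:
  fixes a b :: "'a::real_normed_vector"
  assumes sc: "strictly_convex TYPE('a)" and a: "a \<noteq> 0" and b: "b \<noteq> 0"
    and eq: "norm (a + b) = norm a + norm b"
  shows "\<exists>k. b = k *\<^sub>R a"
proof (rule ccontr)
  assume nk: "\<not> (\<exists>k. b = k *\<^sub>R a)"
  define na where "na = norm a"
  define nb where "nb = norm b"
  have na: "na > 0" "nb > 0" using a b by (auto simp: na_def nb_def)
  have ne: "(1/na) *\<^sub>R a \<noteq> (1/nb) *\<^sub>R b"
  proof
    assume "(1/na) *\<^sub>R a = (1/nb) *\<^sub>R b"
    then have "b = (nb/na) *\<^sub>R a" using na
    proof -
      have "b = nb *\<^sub>R ((1/nb) *\<^sub>R b)" using na by simp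
      also have "\<dots> = nb *\<^sub>R ((1/na) *\<^sub>R a)" using \<open>(1/na) *\<^sub>R a = (1/nb) *\<^sub>R b\<close> by simp
      finally show ?thesis by simp
    qed
    then show False using nk by blast
  qed
  define t where "t = na / (na + nb)"
  have t: "0 < t" "t < 1" using na by (auto simp: t_def)
  have n1: "norm ((1/na) *\<^sub>R a) = 1" "norm ((1/nb) *\<^sub>R b) = 1"
    using na by (auto simp: na_def nb_def)
  have lt: "norm (t *\<^sub>R ((1/na) *\<^sub>R a) + (1 - t) *\<^sub>R ((1/nb) *\<^sub>R b)) < 1"
    using sc n1 ne t unfolding strictly_convex_def by blast
  have "1 - t = nb / (na + nb)" using na by (simp add: t_def field_simps)
  then have "t *\<^sub>R ((1/na) *\<^sub>R a) + (1 - t) *\<^sub>R ((1/nb) *\<^sub>R b) = (1/(na+nb)) *\<^sub>R (a + b)"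
    using na by (simp add: t_def scaleR_add_right)
  then have "norm (t *\<^sub>R ((1/na) *\<^sub>R a) + (1 - t) *\<^sub>R ((1/nb) *\<^sub>R b)) = 1"
  proof -
    have "norm a + norm b > 0" using a b by (simp add: add_pos_pos)
    then show ?thesis using \<open>t *\<^sub>R ((1/na) *\<^sub>R a) + (1 - t) *\<^sub>R ((1/nb) *\<^sub>R b) = (1/(na+nb)) *\<^sub>R (a + b)\<close> eq
      by (simp add: na_def nb_def)
  qed
  then show False using lt by simp
qed

lemma ncol3:
  fixes a b c :: "'a::real_normed_vector"
  assumes "\<not> collinear {a,b,c}"
  shows "a \<noteq> b" "a \<noteq> c" "b \<noteq> c" "\<And>k. a - c \<noteq> k *\<^sub>R (a - b)"
proof -
  show "a \<noteq> b" using assms by auto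
  show "a \<noteq> c" using assms by (auto simp: insert_commute)
  show "b \<noteq> c" using assms by auto
  fix k show "a - c \<noteq> k *\<^sub>R (a - b)"
  proof
    assume h: "a - c = k *\<^sub>R (a - b)"
    have "c - a = k *\<^sub>R (b - a)" using h
      by (metis minus_diff_eq scaleR_minus_right)
    then have "collinear {0, b - a, c - a}" by (auto simp: collinear_lemma)
    then have "collinear {b, a, c}"
      by (subst collinear_3) simp_all
    then show False using assms by (simp add: insert_commute)
  qed
qed

lemma strict_tri:
  fixes a b c :: "'a::real_normed_vector"
  assumes sc: "strictly_convex TYPE('a)" and nc: "\<not> collinear {a,b,c}"
  shows "norm (a - c) < norm (a - b) + norm (b - c)"
proof -
  have le: "norm (a - c) \<le> norm (a - b) + norm (b - c)"
    using norm_triangle_ineq[of "a - b" "b - c"] by simp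
  have "norm (a - c) \<noteq> norm (a - b) + norm (b - c)"
  proof
    assume e: "norm (a - c) = norm (a - b) + norm (b - c)"
    from e have ee: "norm ((a - b) + (b - c)) = norm (a - b) + norm (b - c)" by simp
    have ab: "a - b \<noteq> 0" using ncol3(1)[OF nc] by simp
    have bc: "b - c \<noteq> 0" using ncol3(3)[OF nc] by simp
    obtain k where k: "b - c = k *\<^sub>R (a - b)"
      using sc_eq[OF sc ab bc ee] by blast
    have "a - c = (1 + k) *\<^sub>R (a - b)"
    proof -
      have "a - c = (a - b) + (b - c)" by simp
      also have "\<dots> = (1 + k) *\<^sub>R (a - b)" using k by (simp add: scaleR_add_left)
      finally show ?thesis .
    qed
    then show False using ncol3(4)[OF nc] by blast
  qed
  then show ?thesis using le by simp
qed

lemma col_eq: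
  fixes a b c :: "'a::real_normed_vector"
  assumes "collinear {a,b,c}"
  shows "norm (a - c) = norm (a - b) + norm (b - c) \<or> norm (a - b) = norm (a - c) + norm (c - b)
       \<or> norm (b - c) = norm (b - a) + norm (a - c)"
proof -
  obtain u where u: "\<forall>x\<in>{a,b,c}. \<forall>y\<in>{a,b,c}. \<exists>c. x - y = c *\<^sub>R u"
    using assms unfolding collinear_def by blast
  obtain s where s: "a - b = s *\<^sub>R u" using u by blast
  obtain r where r: "c - b = r *\<^sub>R u" using u by blast
  have ac: "a - c = (s - r) *\<^sub>R u"
  proof -
    have "a - c = (a - b) - (c - b)" by simp
    also have "\<dots> = (s - r) *\<^sub>R u" by (simp only: s r scaleR_diff_left)
    finally show ?thesis .
  qed
  have bc: "b - c = (- r) *\<^sub>R u" using r by (metis minus_diff_eq scaleR_minus_left)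
  have ba: "b - a = (- s) *\<^sub>R u" using s by (metis minus_diff_eq scaleR_minus_left)
  have cb: "c - b = r *\<^sub>R u" by (rule r)
  have "\<bar>s - r\<bar> = \<bar>s\<bar> + \<bar>-r\<bar> \<or> \<bar>s\<bar> = \<bar>s - r\<bar> + \<bar>r\<bar> \<or> \<bar>-r\<bar> = \<bar>-s\<bar> + \<bar>s - r\<bar>"
    by (cases "0 \<le> s"; cases "0 \<le> r"; cases "r \<le> s"; simp add: abs_if)
  then show ?thesis unfolding ac bc ba cb s by (elim disjE) (simp_all add: distrib_right)
qed

lemma part1_tri:
  fixes a b c a' b' c' :: "'a::real_normed_vector"
  assumes sc: "strictly_convex TYPE('a)" and nc: "\<not> collinear {a,b,c}"
    and e1: "norm (a' - b') = norm (a - b)" and e2: "norm (a' - c') = norm (a - c)"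
    and e3: "norm (b' - c') = norm (b - c)"
  shows "\<not> collinear {a',b',c'}"
proof
  assume col: "collinear {a',b',c'}"
  have t1: "norm (a - c) < norm (a - b) + norm (b - c)" by (rule strict_tri[OF sc nc])
  have nc2: "\<not> collinear {a,c,b}" using nc by (simp add: insert_commute)
  have t2: "norm (a - b) < norm (a - c) + norm (c - b)" by (rule strict_tri[OF sc nc2])
  have nc3: "\<not> collinear {b,a,c}" using nc by (simp add: insert_commute)
  have t3: "norm (b - c) < norm (b - a) + norm (a - c)" by (rule strict_tri[OF sc nc3])
  have e4: "norm (c' - b') = norm (c - b)" using e3 by (simp add: norm_minus_commute)
  have e5: "norm (b' - a') = norm (b - a)" using e1 by (simp add: norm_minus_commute)
  from col_eq[OF col] show False
    by (elim disjE) (use t1 t2 t3 e1 e2 e3 e4 e5 in linarith)+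
qed

lemma unit_supp:
  fixes x :: "'a::real_normed_vector"
  assumes sm: "smooth x"
  defines "xh \<equiv> (1 / norm x) *\<^sub>R x"
  shows "bounded_linear (supp_fun xh) \<and> onorm (supp_fun xh) = 1 \<and> supp_fun xh xh = 1"
proof -
  have x0: "x \<noteq> 0" using sm by (simp add: smooth_def)
  define n where "n = norm x"
  have n: "n > 0" using x0 by (simp add: n_def)
  have nxh: "norm xh = 1" using x0 by (simp add: xh_def)
  obtain f where f: "support_functional x f" and uq: "\<And>g. support_functional x g \<Longrightarrow> g = f"
    using sm unfolding smooth_def by blast
  define g where "g = (\<lambda>y. (1/n) *\<^sub>R f y)"
  have fbl: "bounded_linear f" and fon: "onorm f = n" and fx: "f x = n^2"
    using f by (auto simp: support_functional_def n_def)
  have gbl: "bounded_linear g" unfolding g_def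
    by (rule bounded_linear_compose[OF bounded_linear_scaleR_right fbl])
  have gon: "onorm g = 1" unfolding g_def using onorm_scaleR[OF fbl, of "1/n"] fon n by simp
  have xhx: "xh = (1/n) *\<^sub>R x" by (simp add: xh_def n_def)
  have gx: "g xh = 1" unfolding g_def xhx using linear_scale[OF bounded_linear.linear[OF fbl]] fx n
    by (simp add: power2_eq_square)
  have sg: "support_functional xh g" using gbl gon gx nxh by (simp add: support_functional_def)
  have u2: "h = g" if h: "support_functional xh h" for h
  proof -
    have hbl: "bounded_linear h" and hon: "onorm h = 1" and hx: "h xh = 1"
      using h nxh by (auto simp: support_functional_def)
    define k where "k = (\<lambda>y. n *\<^sub>R h y)"
    have kbl: "bounded_linear k" unfolding k_def
      by (rule bounded_linear_compose[OF bounded_linear_scaleR_right hbl])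
    have kon: "onorm k = n" unfolding k_def using onorm_scaleR[OF hbl, of n] hon n by simp
    have xx: "x = n *\<^sub>R xh" using n by (simp add: xhx)
    have kx: "k x = n^2" unfolding k_def xx using linear_scale[OF bounded_linear.linear[OF hbl]] hx
      by (simp add: power2_eq_square)
    have "support_functional x k" using kbl kon kx by (simp add: support_functional_def n_def)
    then have "k = f" by (rule uq)
    show "h = g"
    proof
      fix y
      have "h y = (1/n) * k y" using n by (simp add: k_def)
      then show "h y = g y" using \<open>k = f\<close> by (simp add: g_def)
    qed
  qed
  have "\<exists>!h. support_functional xh h" using sg u2 by blast
  then have "support_functional xh (supp_fun xh)" unfolding supp_fun_def by (rule theI')
  then show ?thesis using nxh by (simp add: support_functional_def)
qed

lemma sc_fun:
  fixes u w :: "'a::real_normed_vector" and F :: "'a \<Rightarrow> real"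
  assumes sc: "strictly_convex TYPE('a)" and "norm u = 1" "norm w = 1" "u \<noteq> w"
    and F: "bounded_linear F" "onorm F = 1" "F u = 1" "F w = 1"
  shows False
proof -
  have lt: "norm ((1/2) *\<^sub>R u + (1 - 1/2) *\<^sub>R w) < 1"
    using sc[unfolded strictly_convex_def, rule_format, of u w "1/2"] assms(2-4) by simp
  have "F ((1/2) *\<^sub>R u + (1 - 1/2) *\<^sub>R w) = 1"
    using linear_add[OF bounded_linear.linear[OF F(1)]] linear_scale[OF bounded_linear.linear[OF F(1)]] F
    by simp
  moreover have "norm (F ((1/2) *\<^sub>R u + (1 - 1/2) *\<^sub>R w)) \<le> norm ((1/2) *\<^sub>R u + (1 - 1/2) *\<^sub>R w)"
    using onorm[OF F(1)] F(2) by simp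
  ultimately show False using lt by simp
qed

lemma two_fun:
  fixes xh yh :: "'a::real_normed_vector" and F G :: "'a \<Rightarrow> real" and a b :: real
  assumes sc: "strictly_convex TYPE('a)" and nx: "norm xh = 1" and ny: "norm yh = 1"
    and d1: "xh \<noteq> yh" and d2: "xh \<noteq> - yh"
    and F: "bounded_linear F" "onorm F = 1" "F xh = 1"
    and G: "bounded_linear G" "onorm G = 1" "G yh = 1"
  shows "\<exists>z. F z = a \<and> G z = b"
proof -
  define c where "c = F yh"
  define d where "d = G xh"
  have c1: "\<bar>c\<bar> \<le> 1" using onorm[OF F(1), of yh] F(2) ny by (simp add: c_def)
  have d1': "\<bar>d\<bar> \<le> 1" using onorm[OF G(1), of xh] G(2) nx by (simp add: d_def)
  have cd: "c * d \<noteq> 1"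
  proof
    assume cd: "c * d = 1"
    have "\<bar>c\<bar> * \<bar>d\<bar> = 1" using cd by (metis abs_mult abs_one)
    then have "\<bar>c\<bar> = 1" using c1 d1'
    proof -
      have "\<bar>c\<bar> * \<bar>d\<bar> \<le> \<bar>c\<bar>" using d1' by (simp add: mult_left_le)
      then show ?thesis using c1 \<open>\<bar>c\<bar> * \<bar>d\<bar> = 1\<close> by linarith
    qed
    then consider "c = 1" | "c = -1" by linarith
    then show False
    proof cases
      case 1
      show False by (rule sc_fun[OF sc nx ny d1 F]) (use 1 c_def in simp)
    next
      case 2
      have "F (- yh) = 1" using 2 linear_neg[OF bounded_linear.linear[OF F(1)]] by (simp add: c_def)
      show False by (rule sc_fun[OF sc nx _ d2 F]) (use ny \<open>F (- yh) = 1\<close> in simp_all)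
    qed
  qed
  define D where "D = 1 - c * d"
  have D: "D \<noteq> 0" using cd by (simp add: D_def)
  define z where "z = ((a - b * c) / D) *\<^sub>R xh + ((b - a * d) / D) *\<^sub>R yh"
  have Fl: "linear F" "linear G" using F(1) G(1) bounded_linear.linear by auto
  have "F z = (a - b * c) / D + ((b - a * d) / D) * c"
    unfolding z_def using linear_add[OF Fl(1)] linear_scale[OF Fl(1)] F(3) by (simp add: c_def)
  also have "\<dots> = ((a - b * c) + (b - a * d) * c) / D" by (simp add: add_divide_distrib)
  also have "(a - b * c) + (b - a * d) * c = a * D" by (simp add: D_def algebra_simps)
  also have "a * D / D = a" using D by simp
  finally have 1: "F z = a" .
  have "G z = (a - b * c) / D * d + ((b - a * d) / D)"
    unfolding z_def using linear_add[OF Fl(2)] linear_scale[OF Fl(2)] G(3) by (simp add: d_def)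
  also have "\<dots> = ((a - b * c) * d + (b - a * d)) / D" by (simp add: add_divide_distrib)
  also have "(a - b * c) * d + (b - a * d) = b * D" by (simp add: D_def algebra_simps)
  also have "b * D / D = b" using D by simp
  finally have 2: "G z = b" .
  show ?thesis using 1 2 by blast
qed

lemma pair_fun:
  fixes x y :: "'a::real_normed_vector"
  assumes sc: "strictly_convex TYPE('a)" and sx: "smooth x" and sy: "smooth y"
    and nk: "\<And>k. y \<noteq> k *\<^sub>R x"
  shows "\<exists>z. supp_fun ((1 / norm x) *\<^sub>R x) z = a \<and> supp_fun ((1 / norm y) *\<^sub>R y) z = b"
proof -
  have x0: "x \<noteq> 0" using sx by (simp add: smooth_def)
  have y0: "y \<noteq> 0" using sy by (simp add: smooth_def)
  have d1: "(1 / norm x) *\<^sub>R x \<noteq> (1 / norm y) *\<^sub>R y"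
  proof
    assume h: "(1 / norm x) *\<^sub>R x = (1 / norm y) *\<^sub>R y"
    have "y = norm y *\<^sub>R ((1 / norm y) *\<^sub>R y)" using y0 by simp
    also have "\<dots> = norm y *\<^sub>R ((1 / norm x) *\<^sub>R x)" by (simp only: h)
    also have "\<dots> = (norm y / norm x) *\<^sub>R x" by simp
    finally show False using nk by blast
  qed
  have d2: "(1 / norm x) *\<^sub>R x \<noteq> - ((1 / norm y) *\<^sub>R y)"
  proof
    assume h: "(1 / norm x) *\<^sub>R x = - ((1 / norm y) *\<^sub>R y)"
    have "y = (- norm y) *\<^sub>R (- ((1 / norm y) *\<^sub>R y))" using y0 by simp
    also have "\<dots> = (- norm y) *\<^sub>R ((1 / norm x) *\<^sub>R x)" by (simp only: h)
    also have "\<dots> = (- norm y / norm x) *\<^sub>R x" by simp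
    finally show False using nk by blast
  qed
  show ?thesis
    using two_fun[OF sc _ _ d1 d2] unit_supp[OF sx] unit_supp[OF sy] x0 y0 by simp
qed

lemma single_fun:
  fixes x :: "'a::real_normed_vector"
  assumes sx: "smooth x"
  shows "supp_fun ((1 / norm x) *\<^sub>R x) (c *\<^sub>R ((1 / norm x) *\<^sub>R x)) = c"
proof -
  define e where "e = (1 / norm x) *\<^sub>R x"
  have bl: "bounded_linear (supp_fun e)" and ee: "supp_fun e e = 1"
    using unit_supp[OF sx] by (auto simp: e_def)
  have "supp_fun e (c *\<^sub>R e) = c *\<^sub>R supp_fun e e"
    by (rule linear_scale[OF bounded_linear.linear[OF bl]])
  then show ?thesis using ee by (simp add: e_def[symmetric])
qed

theorem mainTheorem18:
  fixes p :: "vtx \<Rightarrow> 'a::real_normed_vector"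
  assumes "dim (UNIV :: 'a set) = 2"
    and "strictly_convex TYPE('a)"
    and "three_cycle_gp p"
  shows "(\<forall>q :: vtx \<Rightarrow> 'a. (\<forall>(v,w)\<in>K4e_edges. norm (q v - q w) = norm (p v - p w))
            \<longrightarrow> three_cycle_gp q)
       \<and> (well_positioned p \<longrightarrow> independent_fw p)"
proof (intro conjI allI impI)
  have sc: "strictly_convex TYPE('a)" by fact
  have n1: "\<not> collinear {p v1, p v2, p v3}" and n2: "\<not> collinear {p v2, p v3, p v4}"
    using assms(3) by (auto simp: three_cycle_gp_def)
  fix q :: "vtx \<Rightarrow> 'a"
  assume "\<forall>(v,w)\<in>K4e_edges. norm (q v - q w) = norm (p v - p w)"
  then have e: "norm (q v1 - q v2) = norm (p v1 - p v2)" "norm (q v1 - q v3) = norm (p v1 - p v3)"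
    "norm (q v2 - q v3) = norm (p v2 - p v3)" "norm (q v2 - q v4) = norm (p v2 - p v4)"
    "norm (q v3 - q v4) = norm (p v3 - p v4)"
    by (auto simp: K4e_edges_def)
  show "three_cycle_gp q" unfolding three_cycle_gp_def
    using part1_tri[OF sc n1 e(1,2,3)] part1_tri[OF sc n2 e(3,4,5)] by blast
next
  have sc: "strictly_convex TYPE('a)" by fact
  have n1: "\<not> collinear {p v1, p v2, p v3}" and n2: "\<not> collinear {p v2, p v3, p v4}"
    using assms(3) by (auto simp: three_cycle_gp_def)
  have n2': "\<not> collinear {p v4, p v2, p v3}" using n2 by (simp add: insert_commute)
  assume "well_positioned p"
  then have s: "smooth (p v1 - p v2)" "smooth (p v1 - p v3)" "smooth (p v2 - p v3)"
     "smooth (p v2 - p v4)" "smooth (p v3 - p v4)"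
    by (auto simp: well_positioned_def K4e_edges_def)
  have k1: "\<And>k. p v1 - p v3 \<noteq> k *\<^sub>R (p v1 - p v2)" by (rule ncol3(4)[OF n1])
  have k2: "p v3 - p v4 \<noteq> k *\<^sub>R (p v2 - p v4)" for k
  proof
    assume "p v3 - p v4 = k *\<^sub>R (p v2 - p v4)"
    then have "p v4 - p v3 = k *\<^sub>R (p v4 - p v2)"
      by (metis minus_diff_eq scaleR_minus_right)
    then show False using ncol3(4)[OF n2'] by blast
  qed
  show "independent_fw p" unfolding independent_fw_def
  proof
    fix b :: "vtx \<times> vtx \<Rightarrow> real"
    let ?F = "edge_fun p"
    have lin: "linear (?F v w)" if "smooth (p v - p w)" for v w
      using unit_supp[OF that] bounded_linear.linear by (auto simp: edge_fun_def)
    define u3 where "u3 = (- b (v2,v3)) *\<^sub>R ((1 / norm (p v2 - p v3)) *\<^sub>R (p v2 - p v3))"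
    have h3: "?F v2 v3 (0 - u3) = b (v2,v3)"
      using single_fun[OF s(3), of "b (v2,v3)"] by (simp add: u3_def edge_fun_def)
    obtain u1 where h1: "?F v1 v2 u1 = b (v1,v2)" "?F v1 v3 u1 = b (v1,v3) + ?F v1 v3 u3"
      using pair_fun[OF sc s(1) s(2) k1] unfolding edge_fun_def by blast
    obtain u4 where h4: "?F v2 v4 u4 = - b (v2,v4)" "?F v3 v4 u4 = ?F v3 v4 u3 - b (v3,v4)"
      using pair_fun[OF sc s(4) s(5) k2] unfolding edge_fun_def by blast
    define u where "u = (\<lambda>v. case v of v1 \<Rightarrow> u1 | v2 \<Rightarrow> 0 | v3 \<Rightarrow> u3 | v4 \<Rightarrow> u4)"
    have "?F v1 v2 (u1 - 0) = b (v1,v2)" using h1 by simp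
    moreover have "?F v1 v3 (u1 - u3) = b (v1,v3)" using h1 linear_diff[OF lin[OF s(2)]] by simp
    moreover have "?F v2 v4 (0 - u4) = b (v2,v4)" using h4 linear_neg[OF lin[OF s(4)]] by simp
    moreover have "?F v3 v4 (u3 - u4) = b (v3,v4)" using h4 linear_diff[OF lin[OF s(5)]] by simp
    ultimately show "\<exists>u. \<forall>(v,w)\<in>K4e_edges. ?F v w (u v - u w) = b (v,w)"
      using h3 by (intro exI[of _ u]) (simp add: u_def K4e_edges_def)
  qed
qed

end
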